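(* For all $\lambda_0,\lambda_1\in\Lambda$, $|h(\lambda_0)-h(\lambda_1)|\le\rho\,|\lambda_0-\lambda_1|$.
   Context: Let $p$ be a prime, $\mathbb C_p$ with $p$-adic absolute value, $|p|=1/p$. $\Lambda=\{\lambda\in\mathbb C_p:|\lambda-1|<1\}$, $P_\lambda(z)=\frac{\lambda}{p}z^p+\left(1-\frac{\lambda}{p}\right)z^{p+1}$, $\rho=p^{-1/(p-1)}$. Fix $\hat r\in|\mathbb C_p^*|$, $\hat r>1$, $B=\{z:|z|\le\hat r\}$; $\mathcal H(B)$ is the ring of power series $\sum a_iz^i$ convergent on $B$ with norm $\|f\|_B=\sup_i|a_i|\hat r^{\,i}$. Fix $Q\in\mathcal H(B)$ with $\|Q\|_B<\rho$, $Q^*_\lambda=P_\lambda+Q$, and let $h(\lambda)$ be the unique fixed point of $Q^*_\lambda$ in $\{z:|z-1|\le|Q(1)|/p\}$. *)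

theory Defs
  imports "HOL-Analysis.Analysis" "HOL-Computational_Algebra.Polynomial"
begin

text \<open>An abstract model of C_p: a field of characteristic 0 with an absolute value av
  that is non-archimedean, normalised by |p| = 1/p, complete, algebraically closed, and in
  which the algebraic numbers (roots of nonzero rational polynomials) are dense.  These
  properties characterise C_p up to isometric isomorphism.\<close>

definition is_Cp :: "nat \<Rightarrow> ('a::field_char_0 \<Rightarrow> real) \<Rightarrow> bool" where
  "is_Cp p av \<longleftrightarrow>
     (\<forall>x. av x \<ge> 0) \<and> (\<forall>x. av x = 0 \<longleftrightarrow> x = 0) \<and>
     (\<forall>x y. av (x * y) = av x * av y) \<and>
     (\<forall>x y. av (x + y) \<le> max (av x) (av y)) \<and>
     av (of_nat p) = 1 / real p \<and>
     (\<forall>X::nat \<Rightarrow> 'a. (\<forall>e>0. \<exists>N. \<forall>m\<ge>N. \<forall>n\<ge>N. av (X m - X n) < e) \<longrightarrow>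
          (\<exists>L. (\<lambda>n. av (X n - L)) \<longlonglongrightarrow> 0)) \<and>
     (\<forall>q::'a poly. degree q \<ge> 1 \<longrightarrow> (\<exists>z. poly q z = 0)) \<and>
     (\<forall>x e. e > 0 \<longrightarrow> (\<exists>y. (\<exists>q::rat poly. q \<noteq> 0 \<and> poly (map_poly of_rat q) y = 0)
                              \<and> av (x - y) < e))"

definition rho :: "nat \<Rightarrow> real" where
  "rho p = real p powr (- 1 / (real p - 1))"

definition in_HB :: "('a \<Rightarrow> real) \<Rightarrow> real \<Rightarrow> (nat \<Rightarrow> 'a) \<Rightarrow> bool" where
  "in_HB av rhat a \<longleftrightarrow> (\<lambda>i. av (a i) * rhat ^ i) \<longlonglongrightarrow> 0"

definition HB_norm :: "('a \<Rightarrow> real) \<Rightarrow> real \<Rightarrow> (nat \<Rightarrow> 'a) \<Rightarrow> real" where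
  "HB_norm av rhat a = (SUP i. av (a i) * rhat ^ i)"

definition ps_eval :: "('a::ring_1 \<Rightarrow> real) \<Rightarrow> (nat \<Rightarrow> 'a) \<Rightarrow> 'a \<Rightarrow> 'a" where
  "ps_eval av a z = (THE s. (\<lambda>n. av ((\<Sum>i<n. a i * z ^ i) - s)) \<longlonglongrightarrow> 0)"

definition Plam :: "nat \<Rightarrow> 'a::field \<Rightarrow> 'a \<Rightarrow> 'a" where
  "Plam p l z = l / of_nat p * z ^ p + (1 - l / of_nat p) * z ^ (p + 1)"

definition Qstar :: "nat \<Rightarrow> ('a::field \<Rightarrow> real) \<Rightarrow> (nat \<Rightarrow> 'a) \<Rightarrow> 'a \<Rightarrow> 'a \<Rightarrow> 'a" where
  "Qstar p av a l z = Plam p l z + ps_eval av a z"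

definition h_fix :: "nat \<Rightarrow> ('a::field \<Rightarrow> real) \<Rightarrow> (nat \<Rightarrow> 'a) \<Rightarrow> 'a \<Rightarrow> 'a" where
  "h_fix p av a l = (THE z. av (z - 1) \<le> av (ps_eval av a 1) / real p \<and> Qstar p av a l z = z)"

end

theory Submission
  imports Defs
begin

locale na =
  fixes av :: "'a::field_char_0 \<Rightarrow> real"
  assumes nonneg: "av x \<ge> 0"
    and zero_iff: "av x = 0 \<longleftrightarrow> x = 0"
    and mult: "av (x * y) = av x * av y"
    and ultra: "av (x + y) \<le> max (av x) (av y)"
    and complete: "\<forall>X::nat \<Rightarrow> 'a. (\<forall>e>0. \<exists>N. \<forall>m\<ge>N. \<forall>n\<ge>N. av (X m - X n) < e) \<longrightarrow>
          (\<exists>L. (\<lambda>n. av (X n - L)) \<longlonglongrightarrow> 0)"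
begin

lemma av0[simp]: "av 0 = 0" using zero_iff by simp

lemma nz: "av x = 1 \<Longrightarrow> x \<noteq> 0" by (metis av0 zero_neq_one)

lemma av_le0: "av x \<le> 0 \<Longrightarrow> x = 0" by (metis antisym nonneg zero_iff)

lemma av1[simp]: "av 1 = 1"
proof -
  have "av 1 = av 1 * av 1" using mult[of 1 1] by simp
  moreover have "av 1 \<noteq> 0" using zero_iff by simp
  ultimately show ?thesis by simp
qed

lemma av_minus1: "av (-1) = 1"
proof -
  have "av (-1) * av (-1) = 1" using mult[of "-1" "-1"] by simp
  thus ?thesis using nonneg[of "-1"]
    by (metis abs_of_nonneg mult_1 mult_minus_left real_sqrt_abs2 real_sqrt_one power2_eq_square)
qed

lemma av_minus[simp]: "av (-x) = av x"
  using mult[of "-1" x] av_minus1 by simp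

lemma av_sym: "av (x - y) = av (y - x)"
  by (metis av_minus minus_diff_eq)

lemma ultra_diff: "av (x - y) \<le> max (av x) (av y)"
  using ultra[of x "-y"] by simp

lemma tri: "av (x + y) \<le> av x + av y"
  using ultra[of x y] nonneg[of x] nonneg[of y] by linarith

lemma tri_diff: "av (x - z) \<le> av (x - y) + av (y - z)"
  using tri[of "x - y" "y - z"] by simp

lemma ultra_diff3: "av (x - z) \<le> max (av (x - y)) (av (y - z))"
  using ultra[of "x - y" "y - z"] by simp

lemma strict: assumes "av x < av y" shows "av (x + y) = av y"
proof -
  have a: "av (x + y) \<le> av y" using ultra[of x y] assms by simp
  have "av y \<le> max (av (x + y)) (av x)" using ultra_diff[of "x + y" x] by simp
  thus ?thesis using a assms by linarith
qed

lemma av_power: "av (x ^ n) = av x ^ n"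
  by (induction n) (simp_all add: mult)

lemma av_inverse: "av (inverse x) = inverse (av x)"
proof (cases "x = 0")
  case False
  have "av x * av (inverse x) = 1" using mult[of x "inverse x"] False by simp
  moreover have "av x \<noteq> 0" using False zero_iff by simp
  ultimately show ?thesis by (simp add: field_simps)
qed simp

lemma av_divide: "av (x / y) = av x / av y"
  by (simp add: divide_inverse mult av_inverse)

lemma av_of_nat: "av (of_nat n) \<le> 1"
proof (induction n)
  case (Suc n)
  then show ?case using ultra[of 1 "of_nat n"] by (simp add: add.commute)
qed simp

lemma sum_bound: assumes "finite S" "\<And>i. i \<in> S \<Longrightarrow> av (f i) \<le> B" "0 \<le> B"
  shows "av (sum f S) \<le> B"
  using assms
proof (induction S rule: finite_induct)
  case (insert x F)
  have "av (f x) \<le> B" "av (sum f F) \<le> B" using insert by auto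
  then show ?case using ultra[of "f x" "sum f F"] insert.hyps by simp
qed simp

lemma pow_diff: assumes "av x \<le> 1" "av y \<le> 1" shows "av (x ^ n - y ^ n) \<le> av (x - y)"
proof (induction n)
  case 0 then show ?case using nonneg by simp
next
  case (Suc n)
  have eq: "x ^ Suc n - y ^ Suc n = x * (x ^ n - y ^ n) + (x - y) * y ^ n"
    by (simp add: algebra_simps)
  have 1: "av (x * (x ^ n - y ^ n)) \<le> av (x - y)"
    using Suc assms mult nonneg by (simp add: mult) (metis mult_left_le_one_le order_trans)
  have 2: "av ((x - y) * y ^ n) \<le> av (x - y)"
    using assms nonneg by (simp add: mult av_power mult_left_le power_le_one)
  show ?case unfolding eq using ultra[of "x * (x ^ n - y ^ n)" "(x - y) * y ^ n"] 1 2 by simp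
qed

lemma lim_bound: assumes "(\<lambda>n. av (X n - L)) \<longlonglongrightarrow> 0" "\<And>n. av (X n) \<le> B"
  shows "av L \<le> B"
proof (rule ccontr)
  assume "\<not> av L \<le> B"
  hence "av L > B" by simp
  have "0 \<le> B" using assms(2)[of 0] nonneg[of "X 0"] by simp
  hence "av L > 0" using \<open>av L > B\<close> by simp
  from LIMSEQ_D[OF assms(1) this] obtain n0 where "\<forall>n\<ge>n0. norm (av (X n - L) - 0) < av L"
    by blast
  then obtain n where "av (X n - L) < av L" using nonneg by auto
  moreover have "av L \<le> max (av (X n)) (av (X n - L))" using ultra_diff[of "X n" "X n - L"] by simp
  ultimately show False using assms(2)[of n] \<open>av L > B\<close> by linarith
qed

lemma lim_unique: assumes "(\<lambda>n. av (X n - L)) \<longlonglongrightarrow> 0" "(\<lambda>n. av (X n - M)) \<longlonglongrightarrow> 0"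
  shows "L = M"
proof -
  have "(\<lambda>n. av (X n - L) + av (X n - M)) \<longlonglongrightarrow> 0" using tendsto_add[OF assms] by simp
  moreover have "\<And>n. av (L - M) \<le> av (X n - L) + av (X n - M)"
    using tri_diff av_sym by (metis add.commute)
  ultimately have "av (L - M) \<le> 0"
    by (intro tendsto_le[OF _ _ tendsto_const]) (auto intro: always_eventually)
  thus ?thesis using av_le0[of "L - M"] by simp
qed

end

locale nps = na av for av :: "'a::field_char_0 \<Rightarrow> real" +
  fixes rhat :: real and a :: "nat \<Rightarrow> 'a"
  assumes HB: "in_HB av rhat a" and rhat1: "rhat > 1"
begin

abbreviation "M \<equiv> HB_norm av rhat a"
abbreviation "S z n \<equiv> (\<Sum>i<n. a i * z ^ i)"

lemma coef_bound: "av (a i) \<le> M"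
proof -
  have b: "bdd_above (range (\<lambda>i. av (a i) * rhat ^ i))"
    using HB unfolding in_HB_def by (rule Bseq_bdd_above[OF convergent_imp_Bseq[OF convergentI]])
  have "av (a i) * rhat ^ i \<le> M" unfolding HB_norm_def by (rule cSUP_upper[OF UNIV_I b])
  moreover have "av (a i) \<le> av (a i) * rhat ^ i"
    using rhat1 nonneg[of "a i"] by (simp add: mult_le_cancel_left1 one_le_power)
  ultimately show ?thesis by simp
qed

lemma M_nonneg: "0 \<le> M" using coef_bound[of 0] nonneg[of "a 0"] by simp

lemma coef_to0: "(\<lambda>i. av (a i)) \<longlonglongrightarrow> 0"
proof (rule tendsto_sandwich[of "\<lambda>_. 0" _ _ "\<lambda>i. av (a i) * rhat ^ i"])
  show "\<forall>\<^sub>F n in sequentially. 0 \<le> av (a n)" using nonneg by simp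
  show "\<forall>\<^sub>F n in sequentially. av (a n) \<le> av (a n) * rhat ^ n"
  proof (rule always_eventually, rule allI)
    fix n
    have "av (a n) * 1 \<le> av (a n) * rhat ^ n"
      by (rule mult_left_mono) (use rhat1 nonneg one_le_power in auto)
    thus "av (a n) \<le> av (a n) * rhat ^ n" by simp
  qed
  show "(\<lambda>i. av (a i) * rhat ^ i) \<longlonglongrightarrow> 0" using HB unfolding in_HB_def .
qed simp

lemma term_bound: assumes "av z \<le> 1" shows "av (a i * z ^ i) \<le> av (a i)"
  using assms nonneg by (simp add: mult av_power mult_left_le power_le_one)

lemma S_diff: assumes "n \<le> m" shows "S z m - S z n = (\<Sum>i\<in>{n..<m}. a i * z ^ i)"
  using assms by (metis finite_lessThan lessThan_minus_lessThan lessThan_subset_iff sum_diff)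

lemma ps_conv: assumes "av z \<le> 1"
  shows "(\<lambda>n. av (S z n - ps_eval av a z)) \<longlonglongrightarrow> 0"
proof -
  have C: "\<forall>e>0. \<exists>N. \<forall>m\<ge>N. \<forall>n\<ge>N. av (S z m - S z n) < e"
  proof (intro allI impI)
    fix e :: real assume "e > 0"
    hence "e / 2 > 0" by simp
    from LIMSEQ_D[OF coef_to0 this] obtain N where N: "\<And>i. i \<ge> N \<Longrightarrow> av (a i) < e / 2"
      using nonneg by fastforce
    have key: "av (S z m - S z n) \<le> e / 2" if "N \<le> n" "n \<le> m" for m n
      unfolding S_diff[OF that(2)]
    proof (rule sum_bound)
      fix i assume "i \<in> {n..<m}"
      thus "av (a i * z ^ i) \<le> e / 2" using N[of i] that term_bound[OF assms, of i] by simp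
    qed (use \<open>e > 0\<close> in auto)
    show "\<exists>N. \<forall>m\<ge>N. \<forall>n\<ge>N. av (S z m - S z n) < e"
    proof (intro exI allI impI)
      fix m n assume "N \<le> m" "N \<le> n"
      show "av (S z m - S z n) < e"
      proof (cases "n \<le> m")
        case True then show ?thesis using key[of n m] \<open>N \<le> n\<close> \<open>e > 0\<close> by simp
      next
        case False then show ?thesis using key[of m n] \<open>N \<le> m\<close> \<open>e > 0\<close> av_sym[of "S z m" "S z n"] by simp
      qed
    qed
  qed
  then obtain L where L: "(\<lambda>n. av (S z n - L)) \<longlonglongrightarrow> 0" using spec[OF complete, of "\<lambda>n. S z n"] by blast
  have "ps_eval av a z = L" unfolding ps_eval_def
    by (rule the_equality[where a = L]) (use L lim_unique in auto)
  thus ?thesis using L by simp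
qed

lemma ps_bound: assumes "av z \<le> 1" shows "av (ps_eval av a z) \<le> M"
proof (rule lim_bound[OF ps_conv[OF assms]])
  fix n show "av (S z n) \<le> M"
    by (rule sum_bound) (use order_trans[OF term_bound[OF assms] coef_bound] M_nonneg in auto)
qed

lemma ps_lip: assumes "av z \<le> 1" "av y \<le> 1"
  shows "av (ps_eval av a z - ps_eval av a y) \<le> M * av (z - y)"
proof (rule lim_bound[of "\<lambda>n. S z n - S y n"])
  show "(\<lambda>n. av (S z n - S y n - (ps_eval av a z - ps_eval av a y))) \<longlonglongrightarrow> 0"
  proof (rule tendsto_sandwich[of "\<lambda>_. 0" _ _ "\<lambda>n. av (S z n - ps_eval av a z) + av (S y n - ps_eval av a y)"])
    show "\<forall>\<^sub>F n in sequentially. 0 \<le> av (S z n - S y n - (ps_eval av a z - ps_eval av a y))"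
      using nonneg by simp
    show "\<forall>\<^sub>F n in sequentially. av (S z n - S y n - (ps_eval av a z - ps_eval av a y))
       \<le> av (S z n - ps_eval av a z) + av (S y n - ps_eval av a y)"
    proof (rule always_eventually, rule allI)
      fix n
      have eq: "S z n - S y n - (ps_eval av a z - ps_eval av a y) = (S z n - ps_eval av a z) + (ps_eval av a y - S y n)"
        by simp
      have "av (ps_eval av a y - S y n) = av (S y n - ps_eval av a y)" by (rule av_sym)
      then show "av (S z n - S y n - (ps_eval av a z - ps_eval av a y))
       \<le> av (S z n - ps_eval av a z) + av (S y n - ps_eval av a y)"
        unfolding eq using tri[of "S z n - ps_eval av a z" "ps_eval av a y - S y n"] by simp
    qed
    show "(\<lambda>n. av (S z n - ps_eval av a z) + av (S y n - ps_eval av a y)) \<longlonglongrightarrow> 0"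
      using tendsto_add[OF ps_conv[OF assms(1)] ps_conv[OF assms(2)]] by simp
  qed simp
next
  fix n
  have eq: "S z n - S y n = (\<Sum>i<n. a i * (z ^ i - y ^ i))"
    by (simp add: sum_subtractf algebra_simps)
  show "av (S z n - S y n) \<le> M * av (z - y)"
    unfolding eq
  proof (rule sum_bound)
    fix i
    have "av (a i * (z ^ i - y ^ i)) = av (a i) * av (z ^ i - y ^ i)" by (rule mult)
    also have "\<dots> \<le> M * av (z - y)"
      using coef_bound pow_diff[OF assms] nonneg M_nonneg by (intro mult_mono) auto
    finally show "av (a i * (z ^ i - y ^ i)) \<le> M * av (z - y)" .
  qed (use M_nonneg nonneg in auto)
qed

end

locale nfp = nps av rhat a for av :: "'a::field_char_0 \<Rightarrow> real" and rhat a +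
  fixes p :: nat
  assumes p2: "p \<ge> 2" and avp: "av (of_nat p) = 1 / real p" and M1: "HB_norm av rhat a < 1"
begin

definition "Q z = ps_eval av a z"
definition "N z = z ^ (p + 1) - z + Q z"
definition "T l z = 1 + of_nat p / l * N z / z ^ p"
definition "r = av (Q 1) / real p"

lemma r_nonneg: "0 \<le> r" unfolding r_def using nonneg by simp

lemma Q1_bound: "av (Q 1) \<le> M" unfolding Q_def by (rule ps_bound) simp

lemma r_le: "r \<le> av (Q 1)"
  unfolding r_def using nonneg[of "Q 1"] p2 by (simp add: divide_le_eq mult_le_cancel_left1)

lemma r_lt1: "r < 1" using r_le Q1_bound M1 by simp

lemma inD_av: assumes "av (z - 1) \<le> r" shows "av z = 1"
proof -
  have "av ((z - 1) + 1) = av 1" by (rule strict) (use assms r_lt1 in simp)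
  thus ?thesis by simp
qed

lemma max3: "av (x + y + w) \<le> max (av x) (max (av y) (av w))"
  using ultra[of "x + y" w] ultra[of x y] by simp

lemma N_lip: assumes "av z \<le> 1" "av y \<le> 1" shows "av (N z - N y) \<le> av (z - y)"
proof -
  have eq: "N z - N y = (z ^ (p + 1) - y ^ (p + 1)) + (- (z - y)) + (Q z - Q y)"
    unfolding N_def by simp
  have 1: "av (z ^ (p + 1) - y ^ (p + 1)) \<le> av (z - y)" by (rule pow_diff[OF assms])
  have "av (Q z - Q y) \<le> M * av (z - y)" unfolding Q_def by (rule ps_lip[OF assms])
  also have "\<dots> \<le> av (z - y)" using mult_left_le_one_le[of "av (z - y)" M] M1 M_nonneg nonneg[of "z - y"] by simp
  finally have 2: "av (Q z - Q y) \<le> av (z - y)" .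
  have m: "av (N z - N y) \<le> max (av (z ^ (p + 1) - y ^ (p + 1))) (max (av (- (z - y))) (av (Q z - Q y)))"
    unfolding eq by (rule max3)
  have 3: "av (- (z - y)) \<le> av (z - y)" by (simp only: av_minus order_refl)
  show ?thesis using m 1 2 3 by (meson max.bounded_iff order_trans)
qed

lemma N1: "N 1 = Q 1" unfolding N_def by simp

lemma N_bound: assumes "av (z - 1) \<le> r" shows "av (N z) \<le> av (Q 1)"
proof -
  have z1: "av z \<le> 1" using inD_av[OF assms] by simp
  have "av (N z - N 1) \<le> av (z - 1)" by (rule N_lip[OF z1]) simp
  hence "av (N z - N 1) \<le> av (Q 1)" using assms r_le by simp
  moreover have "av (N z) \<le> max (av (N z - N 1)) (av (N 1))"
    using ultra[of "N z - N 1" "N 1"] by simp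
  ultimately show ?thesis using N1 by simp
qed

lemma avp_l: assumes "av l = 1" shows "av (of_nat p / l) = 1 / real p"
  using assms avp by (simp add: av_divide)

lemma T_maps: assumes "av l = 1" "av (z - 1) \<le> r" shows "av (T l z - 1) \<le> r"
proof -
  have "T l z - 1 = of_nat p / l * N z / z ^ p" unfolding T_def by simp
  hence "av (T l z - 1) = av (N z) / real p"
    using avp assms(1) inD_av[OF assms(2)] by (simp add: av_divide mult av_power)
  also have "\<dots> \<le> av (Q 1) / real p" using N_bound[OF assms(2)] p2 by (simp add: divide_right_mono)
  finally show ?thesis unfolding r_def .
qed

lemma T_contr: assumes "av l = 1" "av (z - 1) \<le> r" "av (y - 1) \<le> r"
  shows "av (T l z - T l y) \<le> av (z - y) / real p"
proof -
  have z: "av z = 1" and y: "av y = 1" using inD_av assms by auto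
  have z0: "z \<noteq> 0" and y0: "y \<noteq> 0" using nz z y by auto
  have l0: "l \<noteq> 0" using assms(1) by (rule nz)
  have eq: "T l z - T l y = of_nat p / l * (((N z - N y) * y ^ p + N y * (y ^ p - z ^ p)) / (z ^ p * y ^ p))"
    unfolding T_def using z0 y0 l0 by (simp add: field_simps)
  have 1: "av ((N z - N y) * y ^ p) \<le> av (z - y)"
    using N_lip[of z y] z y by (simp add: mult av_power)
  have "av (N y * (y ^ p - z ^ p)) = av (N y) * av (y ^ p - z ^ p)" by (rule mult)
  also have "\<dots> \<le> 1 * av (z - y)"
  proof (rule mult_mono)
    show "av (N y) \<le> 1" using N_bound[OF assms(3)] Q1_bound M1 by simp
    show "av (y ^ p - z ^ p) \<le> av (z - y)" using pow_diff[of y z p] y z av_sym[of y z] by simp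
  qed (use nonneg in auto)
  finally have 2: "av (N y * (y ^ p - z ^ p)) \<le> av (z - y)" by simp
  have num: "av ((N z - N y) * y ^ p + N y * (y ^ p - z ^ p)) \<le> av (z - y)"
    using ultra[of "(N z - N y) * y ^ p" "N y * (y ^ p - z ^ p)"] 1 2 by simp
  have "av (T l z - T l y) = 1 / real p * av ((N z - N y) * y ^ p + N y * (y ^ p - z ^ p))"
    unfolding eq using avp assms(1) z y by (simp add: mult av_divide av_power)
  also have "\<dots> \<le> 1 / real p * av (z - y)" using num p2 by (intro mult_left_mono) auto
  finally show ?thesis by simp
qed

lemma T_lam: assumes "av l = 1" "av l' = 1" "av (z - 1) \<le> r"
  shows "av (T l z - T l' z) \<le> r * av (l - l')"
proof -
  have l0: "l \<noteq> 0" "l' \<noteq> 0" using nz[OF assms(1)] nz[OF assms(2)] by blast+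
  have z: "av z = 1" using inD_av[OF assms(3)] .
  hence z0: "z \<noteq> 0" by (rule nz)
  have eq: "T l z - T l' z = of_nat p * (l' - l) / (l * l') * (N z / z ^ p)"
    unfolding T_def using l0 z0 by (simp add: field_simps)
  have "av (T l z - T l' z) = 1 / real p * av (l' - l) * av (N z)"
    unfolding eq using assms z avp by (simp add: mult av_divide av_power)
  also have "\<dots> \<le> 1 / real p * av (l' - l) * av (Q 1)"
    using N_bound[OF assms(3)] nonneg by (intro mult_left_mono) auto
  also have "\<dots> = r * av (l - l')" unfolding r_def using av_sym[of l' l] by simp
  finally show ?thesis .
qed

lemma fix_iff: assumes "l \<noteq> 0" "z \<noteq> 0" shows "Qstar p av a l z = z \<longleftrightarrow> T l z = z"
proof -
  have p0: "(of_nat p :: 'a) \<noteq> 0" using p2 by simp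
  have "Qstar p av a l z = z \<longleftrightarrow> l / of_nat p * z ^ p + (1 - l / of_nat p) * z ^ (p + 1) + Q z = z"
    unfolding Qstar_def Plam_def Q_def by simp
  also have "\<dots> \<longleftrightarrow> of_nat p * N z = l * z ^ p * (z - 1)"
    unfolding N_def using p0 by (simp add: field_simps)
  also have "\<dots> \<longleftrightarrow> T l z = z"
    unfolding T_def using assms p0 by (simp add: field_simps)
  finally show ?thesis .
qed

lemma fix_unique: assumes "av l = 1" "av (z - 1) \<le> r" "av (y - 1) \<le> r" "T l z = z" "T l y = y"
  shows "z = y"
proof -
  have "av (z - y) \<le> av (z - y) / real p" using T_contr[OF assms(1-3)] assms(4,5) by simp
  hence le: "av (z - y) * real p \<le> av (z - y)" using p2 by (simp add: le_divide_eq)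
  have "av (z - y) * 2 \<le> av (z - y) * real p" using p2 nonneg[of "z - y"] by (intro mult_left_mono) auto
  hence "av (z - y) \<le> 0" using le by linarith
  thus ?thesis using av_le0[of "z - y"] by simp
qed

lemma fix_exists: assumes l: "av l = 1" shows "\<exists>z. av (z - 1) \<le> r \<and> T l z = z"
proof -
  define zs where "zs n = (T l ^^ n) 1" for n
  have zsS: "zs (Suc n) = T l (zs n)" for n unfolding zs_def by simp
  have D: "av (zs n - 1) \<le> r" for n
    by (induction n) (simp_all add: zsS r_nonneg zs_def[of 0] T_maps[OF l])
  have step: "av (zs (Suc n) - zs n) \<le> r * (1 / real p) ^ n" for n
  proof (induction n)
    case 0 then show ?case using T_maps[OF l, of 1] r_nonneg by (simp add: zsS zs_def)
  next
    case (Suc n)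
    have "av (T l (zs (Suc n)) - T l (zs n)) \<le> av (zs (Suc n) - zs n) / real p"
      by (rule T_contr[OF l D D])
    hence "av (zs (Suc (Suc n)) - zs (Suc n)) \<le> av (zs (Suc n) - zs n) / real p"
      by (simp only: zsS[symmetric])
    also have "\<dots> \<le> r * (1 / real p) ^ n / real p" using Suc p2 by (simp add: divide_right_mono)
    finally show ?case by (simp add: field_simps)
  qed
  have far: "av (zs m - zs n) \<le> r * (1 / real p) ^ n" if "n \<le> m" for m n
    using that
  proof (induction m rule: dec_induct)
    case base then show ?case using r_nonneg by simp
  next
    case (step m)
    have "(1 / real p) ^ m \<le> (1 / real p) ^ n"
      using step.hyps p2 by (intro power_decreasing) auto
    hence "r * (1 / real p) ^ m \<le> r * (1 / real p) ^ n" using r_nonneg by (rule mult_left_mono)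
    then show ?case using ultra_diff3[of "zs (Suc m)" "zs n" "zs m"] step.IH
      \<open>av (zs (Suc m) - zs m) \<le> r * (1 / real p) ^ m\<close> by simp
  qed
  have lim0: "(\<lambda>n. r * (1 / real p) ^ n) \<longlonglongrightarrow> 0"
    using p2 by (intro tendsto_mult_right_zero LIMSEQ_power_zero) auto
  have C: "\<forall>e>0. \<exists>N. \<forall>m\<ge>N. \<forall>n\<ge>N. av (zs m - zs n) < e"
  proof (intro allI impI)
    fix e :: real assume "e > 0"
    from LIMSEQ_D[OF lim0 this] obtain K where K: "\<And>n. n \<ge> K \<Longrightarrow> \<bar>r * (1 / real p) ^ n\<bar> < e"
      by auto
    show "\<exists>N. \<forall>m\<ge>N. \<forall>n\<ge>N. av (zs m - zs n) < e"
    proof (intro exI allI impI)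
      fix m n assume "K \<le> m" "K \<le> n"
      show "av (zs m - zs n) < e"
      proof (cases "n \<le> m")
        case True then show ?thesis using far[of n m] K[of n] \<open>K \<le> n\<close> by simp
      next
        case False then show ?thesis using far[of m n] K[of m] \<open>K \<le> m\<close> av_sym[of "zs m" "zs n"] by simp
      qed
    qed
  qed
  then obtain L where L: "(\<lambda>n. av (zs n - L)) \<longlonglongrightarrow> 0"
    using spec[OF complete, of zs] by blast
  have LD: "av (L - 1) \<le> r"
  proof (rule lim_bound[of "\<lambda>n. zs n - 1"])
    show "(\<lambda>n. av (zs n - 1 - (L - 1))) \<longlonglongrightarrow> 0" using L by simp
  qed (rule D)
  have "av (T l L - L) \<le> 0"
  proof (rule tendsto_le[OF _ _ tendsto_const])
    show "(\<lambda>n. av (zs n - L) / real p + av (zs (Suc n) - L)) \<longlonglongrightarrow> 0"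
      using tendsto_add[OF tendsto_divide[OF L tendsto_const] L[THEN LIMSEQ_Suc]] p2 by simp
    show "\<forall>\<^sub>F n in sequentially. av (T l L - L) \<le> av (zs n - L) / real p + av (zs (Suc n) - L)"
    proof (rule always_eventually, rule allI)
      fix n
      have "av (T l L - L) \<le> av (T l L - T l (zs n)) + av (T l (zs n) - L)" by (rule tri_diff)
      also have "av (T l L - T l (zs n)) \<le> av (L - zs n) / real p" by (rule T_contr[OF l LD D])
      finally show "av (T l L - L) \<le> av (zs n - L) / real p + av (zs (Suc n) - L)"
        using zsS[of n] av_sym[of L "zs n"] by simp
    qed
  qed simp
  hence "T l L = L" using av_le0[of "T l L - L"] by simp
  thus ?thesis using LD by blast
qed

lemma h_fix_char: assumes l: "av l = 1"
  shows "av (h_fix p av a l - 1) \<le> r \<and> T l (h_fix p av a l) = h_fix p av a l"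
proof -
  obtain z where z: "av (z - 1) \<le> r" "T l z = z" using fix_exists[OF l] by blast
  have l0: "l \<noteq> 0" using l by (rule nz)
  have nz: "y \<noteq> 0" if "av (y - 1) \<le> r" for y using inD_av[OF that] by (rule nz)
  have "h_fix p av a l = z" unfolding h_fix_def
  proof (rule the_equality)
    show "av (z - 1) \<le> av (ps_eval av a 1) / real p \<and> Qstar p av a l z = z"
      using z fix_iff[OF l0 nz[OF z(1)]] unfolding r_def Q_def by simp
  next
    fix y assume "av (y - 1) \<le> av (ps_eval av a 1) / real p \<and> Qstar p av a l y = y"
    hence y: "av (y - 1) \<le> r" "Qstar p av a l y = y" unfolding r_def Q_def by auto
    hence "T l y = y" using fix_iff[OF l0 nz[OF y(1)]] by simp
    thus "y = z" using fix_unique[OF l y(1) z(1)] z(2) by simp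
  qed
  thus ?thesis using z by simp
qed

lemma h_lip: assumes "av l0 = 1" "av l1 = 1"
  shows "av (h_fix p av a l0 - h_fix p av a l1) \<le> r * av (l0 - l1)"
proof -
  define z0 where "z0 = h_fix p av a l0"
  define z1 where "z1 = h_fix p av a l1"
  have h0: "av (z0 - 1) \<le> r" "T l0 z0 = z0" using h_fix_char[OF assms(1)] unfolding z0_def by auto
  have h1: "av (z1 - 1) \<le> r" "T l1 z1 = z1" using h_fix_char[OF assms(2)] unfolding z1_def by auto
  have "av (z0 - z1) \<le> max (av (T l0 z0 - T l0 z1)) (av (T l0 z1 - T l1 z1))"
    using ultra_diff3[of "T l0 z0" "T l1 z1" "T l0 z1"] h0 h1 by simp
  moreover have "av (T l0 z0 - T l0 z1) \<le> av (z0 - z1) / real p" by (rule T_contr[OF assms(1) h0(1) h1(1)])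
  moreover have "av (T l0 z1 - T l1 z1) \<le> r * av (l0 - l1)" by (rule T_lam[OF assms h1(1)])
  moreover have "av (z0 - z1) / real p < av (z0 - z1) \<or> av (z0 - z1) = 0"
    using p2 nonneg[of "z0 - z1"] by (auto simp: divide_less_eq)
  ultimately show ?thesis unfolding z0_def[symmetric] z1_def[symmetric]
    using r_nonneg nonneg[of "l0 - l1"] by (smt (verit) mult_nonneg_nonneg)
qed

end

theorem proposition3p4:
  fixes av :: "'a::field_char_0 \<Rightarrow> real" and p :: nat and rhat :: real
    and a :: "nat \<Rightarrow> 'a" and l0 l1 :: 'a
  assumes "prime p" and "is_Cp p av"
    and "rhat \<in> av ` (UNIV - {0})" and "rhat > 1"
    and "in_HB av rhat a" and "HB_norm av rhat a < rho p"
    and "av (l0 - 1) < 1" and "av (l1 - 1) < 1"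
  shows "av (h_fix p av a l0 - h_fix p av a l1) \<le> rho p * av (l0 - l1)"
proof -
  have p2: "p \<ge> 2" using assms(1) by (simp add: prime_ge_2_nat)
  have h1: "1 < real p" using p2 by simp
  have h2: "- 1 / (real p - 1) < 0" using h1 by (intro divide_neg_pos) auto
  have rho1: "rho p < 1" unfolding rho_def by (rule powr_less_one[OF h1 h2])
  have C1: "\<forall>x. av x \<ge> 0" using assms(2) unfolding is_Cp_def by (elim conjE) assumption
  have C2: "\<forall>x. av x = 0 \<longleftrightarrow> x = 0" using assms(2) unfolding is_Cp_def by (elim conjE) assumption
  have C3: "\<forall>x y. av (x * y) = av x * av y" using assms(2) unfolding is_Cp_def by (elim conjE) assumption
  have C4: "\<forall>x y. av (x + y) \<le> max (av x) (av y)" using assms(2) unfolding is_Cp_def by (elim conjE) assumption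
  have C5: "av (of_nat p) = 1 / real p" using assms(2) unfolding is_Cp_def by (elim conjE) assumption
  have C6: "\<forall>X::nat \<Rightarrow> 'a. (\<forall>e>0. \<exists>N. \<forall>m\<ge>N. \<forall>n\<ge>N. av (X m - X n) < e) \<longrightarrow>
          (\<exists>L. (\<lambda>n. av (X n - L)) \<longlonglongrightarrow> 0)" using assms(2) unfolding is_Cp_def by (elim conjE) assumption
  interpret na av
  proof
    fix x y :: 'a
    show "av x \<ge> 0" using C1 by (rule spec)
    show "av x = 0 \<longleftrightarrow> x = 0" using C2 by (rule spec)
    show "av (x * y) = av x * av y" using C3 by (elim allE)
    show "av (x + y) \<le> max (av x) (av y)" using C4 by (elim allE)
  qed (rule C6)
  interpret nfp av rhat a p
  proof unfold_locales
    show "in_HB av rhat a" by (rule assms(5))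
    show "rhat > 1" by (rule assms(4))
    show "p \<ge> 2" by (rule p2)
    show "av (of_nat p) = 1 / real p" by (rule C5)
    show "HB_norm av rhat a < 1" using assms(6) rho1 by simp
  qed
  have l0: "av l0 = 1" using strict[of "l0 - 1" 1] assms(7) by simp
  have l1: "av l1 = 1" using strict[of "l1 - 1" 1] assms(8) by simp
  have "r \<le> rho p"
  proof -
    have "r \<le> av (Q 1)" by (rule r_le)
    also have "\<dots> \<le> HB_norm av rhat a" by (rule Q1_bound)
    finally show ?thesis using assms(6) by simp
  qed
  hence "r * av (l0 - l1) \<le> rho p * av (l0 - l1)" using nonneg by (intro mult_right_mono) auto
  thus ?thesis using h_lip[OF l0 l1] by simp
qed

end
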